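(* Let $p\in(1,\infty)$ and $X\in\mathfrak A_p$. Let $\theta\in[0,\underline Q_\mu(1))$ and let $S\subset X$ be a closed set with $\mathcal H_\theta(S)\in(0,+\infty)$. Then $\mathfrak M^{str}_\theta(S)=\mathfrak M_\theta(S)$.
   Context: A metric measure space is a triple $X=(X,d,\mu)$ with $(X,d)$ a complete separable metric space and $\mu$ a Borel regular measure with $0<\mu(B)<\infty$ for every ball $B$ and $\operatorname{supp}\mu=X$. All balls are closed: $B_r(x)=\{y:d(x,y)\le r\}$; $r(B)$ is the radius. A measure on $X$ means a nonzero Borel regular locally finite (outer) measure. $\mu$ is uniformly locally doubling if for every $R>0$, $\sup_{r\in(0,R]}\sup_x\mu(B_{2r}(x))/\mu(B_r(x))<\infty$. $\operatorname{lip}f(x)=\limsup_{y\to x}|f(y)-f(x)|/d(x,y)$ at accumulation points, $0$ otherwise; $\mathcal E_{\mathfrak m}(f,G)=\inf_{c}\frac1{\mathfrak m(G)}\int_G|f-c|d\mathfrak m$. $X\in\mathfrak A_q$ if $\mu$ is uniformly locally doubling and for every $R>0$ there are $C>0,\lambda\ge1$ with $\mathcal E_\mu(f,B_r(x))\le Cr(\frac1{\mu(B_{\lambda r}(x))}\int_{B_{\lambda r}(x)}(\operatorname{lip}f)^qd\mu)^{1/q}$ for all Lipschitz $f$, $x$, $r\in(0,R]$. $\mu$ has relative lower volume decay of order $Q>0$ up to scale $R$ if there is $C(Q,R)>0$ with $(r(B')/r(B))^Q\le C(Q,R)\mu(B')/\mu(B)$ for all closed balls $B'\subset B$ with $r(B)<R$;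 $\operatorname{Q}_\mu(R)$ is the set of such $Q$ and $\underline Q_\mu(R)=\inf\operatorname{Q}_\mu(R)$. For $\theta\ge0$, $\mathcal H_{\theta,\delta}(E)=\inf\{\sum_i\mu(B_{r_i}(x_i))/r_i^\theta:E\subset\bigcup_iB_{r_i}(x_i),\ r_i<\delta\}$ and $\mathcal H_\theta(E)=\lim_{\delta\to0}\mathcal H_{\theta,\delta}(E)$. $\{\mathfrak m_k\}_{k=0}^\infty\in\mathfrak M_\theta(S)$ (with parameter $\epsilon\in(0,1)$) means: (M1) $\operatorname{supp}\mathfrak m_k=S$ for all $k$; (M2) there is $C_1>0$ with $\mathfrak m_k(B_r(x))\le C_1\mu(B_r(x))/r^\theta$ for all $k$, $x\in X$, $r\in(0,\epsilon^k]$; (M3) there is $C_2>0$ with $\mathfrak m_k(B_r(x))\ge C_2\mu(B_r(x))/r^\theta$ for all $k$, $x\in S$, $r\in[\epsilon^k,1]$; (M4) $\mathfrak m_k=w_k\mathfrak m_0$ with $w_k\in L^\infty(\mathfrak m_0)$ and $C_3>0$ such that $\epsilon^{\theta j}/C_3\le w_k(x)/w_{k+j}(x)\le C_3$ for $\mathfrak m_0$-a.e. $x\in S$, all $k,j$. $\{\mathfrak m_k\}\in\mathfrak M^{str}_\theta(S)$ if moreover (M5) for every Borel $E\subset S$, $\limsup_{k\to\infty}\mathfrak m_k(B_{\epsilon^k}(x)\cap E)/\mathfrak m_k(B_{\epsilon^k}(x))>0$ for $\mathfrak m_0$-a.e. $x\in E$. *)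

theory Defs
  imports "HOL-Analysis.Analysis" "HOL-Library.Liminf_Limsup"
begin

definition supp_meas :: "'a::metric_space measure \<Rightarrow> 'a set" where
  "supp_meas m = {x. \<forall>r>0. emeasure m (ball x r) > 0}"

definition mms :: "'a::polish_space measure \<Rightarrow> bool" where
  "mms \<mu> \<longleftrightarrow> sets \<mu> = sets borel \<and>
     (\<forall>x r. r > 0 \<longrightarrow> 0 < emeasure \<mu> (cball x r) \<and> emeasure \<mu> (cball x r) < \<infinity>) \<and>
     supp_meas \<mu> = UNIV"

definition is_meas :: "'a::metric_space measure \<Rightarrow> bool" where
  "is_meas m \<longleftrightarrow> sets m = sets borel \<and> emeasure m UNIV \<noteq> 0 \<and>
     (\<forall>x. \<exists>r>0. emeasure m (ball x r) < \<infinity>)"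

definition unif_loc_doubling :: "'a::metric_space measure \<Rightarrow> bool" where
  "unif_loc_doubling \<mu> \<longleftrightarrow> (\<forall>R>0. \<exists>C. \<forall>r x. 0 < r \<longrightarrow> r \<le> R \<longrightarrow>
      measure \<mu> (cball x (2*r)) \<le> C * measure \<mu> (cball x r))"

definition lipf :: "('a::metric_space \<Rightarrow> real) \<Rightarrow> 'a \<Rightarrow> ereal" where
  "lipf f x = (if x islimpt UNIV
     then Limsup (at x) (\<lambda>y. ereal (\<bar>f y - f x\<bar> / dist x y)) else 0)"

definition osc :: "'a measure \<Rightarrow> ('a \<Rightarrow> real) \<Rightarrow> 'a set \<Rightarrow> ennreal" where
  "osc m f G = (INF c::real. (\<integral>\<^sup>+ y\<in>G. ennreal \<bar>f y - c\<bar> \<partial>m) / emeasure m G)"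

definition class_A :: "real \<Rightarrow> 'a::polish_space measure \<Rightarrow> bool" where
  "class_A q \<mu> \<longleftrightarrow> mms \<mu> \<and> unif_loc_doubling \<mu> \<and>
    (\<forall>R>0. \<exists>C>0. \<exists>lam\<ge>1. \<forall>f x r. (\<exists>L. L-lipschitz_on UNIV f) \<longrightarrow> 0 < r \<longrightarrow> r \<le> R \<longrightarrow>
        osc \<mu> f (cball x r) \<le>
        ennreal (C * r * (enn2real (\<integral>\<^sup>+ y\<in>cball x (lam*r). ennreal (real_of_ereal (lipf f y) powr q) \<partial>\<mu>)
                            / measure \<mu> (cball x (lam*r))) powr (1/q)))"

text \<open>Relative lower volume decay exponents up to scale R, and their infimum (+infinity if none).\<close>
definition Q_set :: "'a::metric_space measure \<Rightarrow> real \<Rightarrow> real set" where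
  "Q_set \<mu> R = {Q. Q > 0 \<and> (\<exists>C>0. \<forall>x r x' r'. 0 < r \<longrightarrow> 0 < r' \<longrightarrow> r < R \<longrightarrow>
      cball x' r' \<subseteq> cball x r \<longrightarrow>
      (r' / r) powr Q \<le> C * (measure \<mu> (cball x' r') / measure \<mu> (cball x r)))}"

definition Q_lower :: "'a::metric_space measure \<Rightarrow> real \<Rightarrow> ereal" where
  "Q_lower \<mu> R = Inf (ereal ` Q_set \<mu> R)"

text \<open>Codimension-theta Hausdorff content at scale delta (countable, possibly finite covers indexed by I)
  and the limit as delta tends to 0 (an increasing limit, hence a supremum).\<close>
definition H_delta :: "real \<Rightarrow> 'a::metric_space measure \<Rightarrow> real \<Rightarrow> 'a set \<Rightarrow> ennreal" where
  "H_delta \<theta> \<mu> \<delta> E = (INF cov \<in> {(I, c, r). (I::nat set) \<subseteq> UNIV \<and>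
        (\<forall>i\<in>I. 0 < r i \<and> r i < \<delta>) \<and> E \<subseteq> (\<Union>i\<in>I. cball (c i) (r i))}.
      case cov of (I, c, r) \<Rightarrow>
        (\<Sum>i. if i \<in> I then emeasure \<mu> (cball (c i) (r i)) / ennreal (r i powr \<theta>) else 0))"

definition H_theta :: "real \<Rightarrow> 'a::metric_space measure \<Rightarrow> 'a set \<Rightarrow> ennreal" where
  "H_theta \<theta> \<mu> E = (SUP \<delta>\<in>{0<..}. H_delta \<theta> \<mu> \<delta> E)"

definition M_class :: "real \<Rightarrow> real \<Rightarrow> 'a::metric_space measure \<Rightarrow> 'a set \<Rightarrow> (nat \<Rightarrow> 'a measure) set" where
  "M_class \<theta> \<epsilon> \<mu> S = {m. (\<forall>k. is_meas (m k)) \<and>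
     (\<forall>k. supp_meas (m k) = S) \<and>
     (\<exists>C1>0. \<forall>k x r. 0 < r \<longrightarrow> r \<le> \<epsilon>^k \<longrightarrow>
        emeasure (m k) (cball x r) \<le> ennreal (C1 * measure \<mu> (cball x r) / r powr \<theta>)) \<and>
     (\<exists>C2>0. \<forall>k. \<forall>x\<in>S. \<forall>r. \<epsilon>^k \<le> r \<longrightarrow> r \<le> 1 \<longrightarrow>
        ennreal (C2 * measure \<mu> (cball x r) / r powr \<theta>) \<le> emeasure (m k) (cball x r)) \<and>
     (\<exists>w::nat \<Rightarrow> 'a \<Rightarrow> real.
        (\<forall>k. w k \<in> borel_measurable borel \<and> (\<exists>B. AE x in m 0. \<bar>w k x\<bar> \<le> B) \<and>
             m k = density (m 0) (\<lambda>x. ennreal (w k x))) \<and>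
        (\<exists>C3>0. \<forall>k j. AE x in m 0. x \<in> S \<longrightarrow>
             \<epsilon> powr (\<theta> * real j) / C3 \<le> w k x / w (k + j) x \<and> w k x / w (k + j) x \<le> C3))}"

definition M_str_class :: "real \<Rightarrow> real \<Rightarrow> 'a::metric_space measure \<Rightarrow> 'a set \<Rightarrow> (nat \<Rightarrow> 'a measure) set" where
  "M_str_class \<theta> \<epsilon> \<mu> S = {m. m \<in> M_class \<theta> \<epsilon> \<mu> S \<and>
     (\<forall>E. E \<in> sets borel \<longrightarrow> E \<subseteq> S \<longrightarrow>
        (AE x in m 0. x \<in> E \<longrightarrow>
          limsup (\<lambda>k. ereal (measure (m k) (cball x (\<epsilon>^k) \<inter> E) / measure (m k) (cball x (\<epsilon>^k)))) > 0))}"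

end

theory Submission
  imports Defs
begin

lemma fact2:
  fixes m :: "nat \<Rightarrow> 'a::polish_space measure" and w :: "nat \<Rightarrow> 'a \<Rightarrow> real"
  assumes sets0: "sets (m 0) = sets borel"
    and wdens: "\<forall>k. w k \<in> borel_measurable borel \<and> m k = density (m 0) (\<lambda>x. ennreal (w k x))"
    and C3: "C3 > 0" "\<forall>k j. AE x in m 0. x \<in> S \<longrightarrow> \<epsilon> powr (\<theta> * real j) / C3 \<le> w k x / w (k + j) x \<and> w k x / w (k + j) x \<le> C3"
    and eps: "0 < \<epsilon>"
    and A: "A \<in> sets borel" "A \<subseteq> S"
  shows "emeasure (m 0) A \<le> ennreal C3 * emeasure (m k) A"
proof -
  have ae: "AE x in m 0. x \<in> S \<longrightarrow> \<epsilon> powr (\<theta> * real k) / C3 \<le> w 0 x / w k x \<and> w 0 x / w k x \<le> C3"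
    using C3(2)[THEN spec[of _ 0], THEN spec[of _ k]] by simp
  have ae2: "AE x in m 0. ennreal (w 0 x) * indicator A x \<le> ennreal C3 * (ennreal (w k x) * indicator A x)"
  proof (rule eventually_mono[OF ae])
    fix x assume h: "x \<in> S \<longrightarrow> \<epsilon> powr (\<theta> * real k) / C3 \<le> w 0 x / w k x \<and> w 0 x / w k x \<le> C3"
    show "ennreal (w 0 x) * indicator A x \<le> ennreal C3 * (ennreal (w k x) * indicator A x)"
    proof (cases "x \<in> A")
      case False then show ?thesis by simp
    next
      case True
      then have xS: "x \<in> S" using A by auto
      have q: "0 < \<epsilon> powr (\<theta> * real k) / C3" using eps C3 by simp
      with h xS have r1: "0 < w 0 x / w k x" and r2: "w 0 x / w k x \<le> C3" by auto
      have "ennreal (w 0 x) \<le> ennreal C3 * ennreal (w k x)"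
      proof (cases "w k x > 0")
        case True
        then have "w 0 x \<le> C3 * w k x" using r2 by (simp add: divide_le_eq)
        then have "ennreal (w 0 x) \<le> ennreal (C3 * w k x)" by (rule ennreal_leI)
        also have "\<dots> = ennreal C3 * ennreal (w k x)" using C3(1) True by (simp add: ennreal_mult)
        finally show ?thesis .
      next
        case False
        then have "w k x < 0" using r1 by (cases "w k x = 0") auto
        then have "w 0 x < 0" using r1 by (simp add: zero_less_divide_iff)
        then show ?thesis by (simp add: ennreal_neg)
      qed
      then show ?thesis using True by simp
    qed
  qed
  have mw0: "w j \<in> borel_measurable (m 0)" for j
    by (subst measurable_cong_sets[OF sets0 refl]) (use wdens in blast)
  have mw: "\<And>j. (\<lambda>x. ennreal (w j x)) \<in> borel_measurable (m 0)"
    using mw0 by measurable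
  have A0: "A \<in> sets (m 0)" using A sets0 by simp
  have "emeasure (m 0) A = emeasure (density (m 0) (\<lambda>x. ennreal (w 0 x))) A"
    by (rule arg_cong[of _ _ "\<lambda>M. emeasure M A", OF wdens[rule_format, of 0, THEN conjunct2]])
  also have "\<dots> = (\<integral>\<^sup>+ x. ennreal (w 0 x) * indicator A x \<partial>m 0)"
    by (rule emeasure_density[OF mw A0])
  also have "\<dots> \<le> (\<integral>\<^sup>+ x. ennreal C3 * (ennreal (w k x) * indicator A x) \<partial>m 0)"
    by (rule nn_integral_mono_AE[OF ae2])
  also have "\<dots> = ennreal C3 * (\<integral>\<^sup>+ x. ennreal (w k x) * indicator A x \<partial>m 0)"
    by (rule nn_integral_cmult) (use mw A0 in measurable)
  also have "(\<integral>\<^sup>+ x. ennreal (w k x) * indicator A x \<partial>m 0) = emeasure (density (m 0) (\<lambda>x. ennreal (w k x))) A"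
    by (rule emeasure_density[OF mw A0, symmetric])
  also have "\<dots> = emeasure (m k) A"
    by (rule arg_cong[of _ _ "\<lambda>M. emeasure M A", OF wdens[rule_format, of k, THEN conjunct2, symmetric]])
  finally show ?thesis .
qed


lemma fact3:
  fixes m :: "nat \<Rightarrow> 'a::polish_space measure" and \<mu> :: "'a measure"
  assumes sets: "\<forall>k. sets (m k) = sets borel"
    and C1: "C1 > 0" "\<forall>k x r. 0 < r \<longrightarrow> r \<le> \<epsilon>^k \<longrightarrow> emeasure (m k) (cball x r) \<le> ennreal (C1 * measure \<mu> (cball x r) / r powr \<theta>)"
    and f2: "\<forall>k A. A \<in> sets borel \<longrightarrow> A \<subseteq> S \<longrightarrow> emeasure (m 0) A \<le> ennreal C3 * emeasure (m k) A"
    and C3: "C3 > 0" and eps: "0 < \<epsilon>" and E: "E \<in> sets borel" "E \<subseteq> S"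
  shows "emeasure (m 0) (cball x (\<epsilon>^k) \<inter> E) \<le> ennreal (C3 * C1 * (measure (m k) (cball x (\<epsilon>^k) \<inter> E) / measure (m k) (cball x (\<epsilon>^k))) * measure \<mu> (cball x (\<epsilon>^k)) / (\<epsilon>^k) powr \<theta>)"
proof -
  define B where "B = cball x (\<epsilon>^k)"
  define c where "c = C1 * measure \<mu> B / (\<epsilon>^k) powr \<theta>"
  define a where "a = measure (m k) (B \<inter> E) / measure (m k) B"
  have c0: "c \<ge> 0" unfolding c_def using C1 by simp
  have Bm: "B \<in> sets (m k)" "B \<inter> E \<in> sets (m k)" using sets E unfolding B_def by auto
  have fin: "emeasure (m k) B \<le> ennreal c" using C1(2) eps unfolding c_def B_def by simp
  then have finB: "emeasure (m k) B < \<infinity>" using ennreal_less_top[of c] unfolding infinity_ennreal_def by (rule le_less_trans)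
  have mkB: "measure (m k) B \<le> c"
    using fin finB c0 by (metis enn2real_ennreal enn2real_mono ennreal_less_top measure_def)
  have BEle: "measure (m k) (B \<inter> E) \<le> measure (m k) B"
    using Bm finB by (intro measure_mono_fmeasurable) (auto simp: fmeasurable_def)
  have eq: "measure (m k) (B \<inter> E) = a * measure (m k) B"
  proof (cases "measure (m k) B = 0")
    case True then show ?thesis using BEle measure_nonneg[of "m k" "B \<inter> E"] by simp
  next
    case False then show ?thesis unfolding a_def by simp
  qed
  have a0: "a \<ge> 0" unfolding a_def by simp
  have finBE: "emeasure (m k) (B \<inter> E) < \<infinity>"
    using finB emeasure_mono[OF _ Bm(1), of "B \<inter> E"] by (meson inf_le1 le_less_trans)
  have "emeasure (m k) (B \<inter> E) = ennreal (measure (m k) (B \<inter> E))"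
    by (rule emeasure_eq_ennreal_measure) (use finBE in auto)
  also have "\<dots> \<le> ennreal (a * c)" unfolding eq using mkB a0 by (intro ennreal_leI mult_left_mono)
  finally have h1: "emeasure (m k) (B \<inter> E) \<le> ennreal (a * c)" .
  have "emeasure (m 0) (B \<inter> E) \<le> ennreal C3 * emeasure (m k) (B \<inter> E)"
    using f2 E unfolding B_def by (meson borel_closed closed_cball le_infI2 sets.Int)
  also have "\<dots> \<le> ennreal C3 * ennreal (a * c)" using h1 by (intro mult_left_mono) auto
  also have "\<dots> = ennreal (C3 * (a * c))" using C3 a0 c0 by (simp add: ennreal_mult)
  also have "C3 * (a * c) = C3 * C1 * a * measure \<mu> B / (\<epsilon>^k) powr \<theta>"
    unfolding c_def by (simp add: field_simps)
  finally show ?thesis unfolding B_def a_def .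
qed

lemma dbl_iter:
  fixes \<mu> :: "'a::metric_space measure"
  assumes dbl: "\<forall>r x. 0<r \<longrightarrow> r \<le> R \<longrightarrow> measure \<mu> (cball x (2*r)) \<le> D * measure \<mu> (cball x r)"
    and D: "D \<ge> 0"
  shows "0 < r \<Longrightarrow> 2^n * r \<le> 2*R \<Longrightarrow> measure \<mu> (cball x (2^n*r)) \<le> D^n * measure \<mu> (cball x r)"
proof (induction n)
  case 0 then show ?case by simp
next
  case (Suc n)
  have p: "0 < 2^n * r" using Suc by simp
  have l: "2^n * r \<le> R" using Suc.prems by simp
  then have "2^n * r \<le> 2 * R" using p by simp
  then have IH: "measure \<mu> (cball x (2^n*r)) \<le> D^n * measure \<mu> (cball x r)" using Suc by simp
  have "measure \<mu> (cball x (2^Suc n*r)) = measure \<mu> (cball x (2*(2^n*r)))" by (simp add: mult.assoc)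
  also have "\<dots> \<le> D * measure \<mu> (cball x (2^n*r))" using dbl p l by blast
  also have "\<dots> \<le> D * (D^n * measure \<mu> (cball x r))" using IH D by (intro mult_left_mono)
  finally show ?case by simp
qed

lemma exists_scale:
  fixes \<epsilon> r :: real
  assumes eps: "0 < \<epsilon>" "\<epsilon> < 1" and r: "0 < r" "2 * r < \<epsilon>^(K+1)"
  shows "\<exists>k\<ge>K. 2 * r \<le> \<epsilon>^k \<and> \<epsilon>^(k+1) < 2 * r"
proof -
  obtain n where n: "\<epsilon>^n < 2 * r" using real_arch_pow_inv[of "2*r" \<epsilon>] eps r by auto
  define n0 where "n0 = (LEAST n. \<epsilon>^n < 2 * r)"
  have n0: "\<epsilon>^n0 < 2 * r" unfolding n0_def by (rule LeastI[of _ n]) (rule n)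
  have min: "\<And>j. j < n0 \<Longrightarrow> \<not> \<epsilon>^j < 2 * r" unfolding n0_def by (rule not_less_Least)
  have "K + 1 < n0"
  proof (rule ccontr)
    assume "\<not> K + 1 < n0"
    then have "n0 \<le> K + 1" by simp
    then have "\<epsilon>^(K+1) \<le> \<epsilon>^n0" using eps by (intro power_decreasing) auto
    then show False using n0 r by simp
  qed
  then obtain k where k: "n0 = k + 1" "k \<ge> K" by (metis add.commute add_lessD1 less_imp_Suc_add plus_1_eq_Suc le_add1 add_Suc)
  have "\<not> \<epsilon>^k < 2 * r" using min k by simp
  then show ?thesis using k n0 by (intro exI[of _ k]) auto
qed

lemma cover_bound:
  fixes \<mu> :: "'a::polish_space measure" and m0 :: "'a measure" and a :: "nat \<Rightarrow> 'a \<Rightarrow> real"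
  assumes mms: "mms \<mu>"
    and dbl: "\<forall>r x. 0<r \<longrightarrow> r \<le> 2^M \<longrightarrow> measure \<mu> (cball x (2*r)) \<le> D * measure \<mu> (cball x r)"
    and D: "D \<ge> 0" and M: "1 + 2/\<epsilon> \<le> 2^M"
    and th: "0 \<le> \<theta>" and eps: "0 < \<epsilon>" "\<epsilon> < 1"
    and Hfin: "H_theta \<theta> \<mu> S < \<infinity>"
    and sets0: "sets m0 = sets borel"
    and E: "E \<in> sets borel" "E \<subseteq> S"
    and f3: "\<forall>x\<in>S. \<forall>k. emeasure m0 (cball x (\<epsilon>^k) \<inter> E) \<le> ennreal (Cc * a k x * measure \<mu> (cball x (\<epsilon>^k)) / (\<epsilon>^k) powr \<theta>)"
    and Cc: "Cc > 0" and t: "t > 0"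
  shows "\<exists>U\<in>sets borel. {x\<in>E. \<forall>k\<ge>K. a k x \<le> t} \<subseteq> U \<and>
           emeasure m0 U \<le> ennreal (t * Cc * D^M * (enn2real (H_theta \<theta> \<mu> S) + 1))"
proof -
  define A where "A = {x\<in>E. \<forall>k\<ge>K. a k x \<le> t}"
  define H where "H = enn2real (H_theta \<theta> \<mu> S)"
  have H0: "H \<ge> 0" unfolding H_def by simp
  have HH: "H_theta \<theta> \<mu> S = ennreal H" unfolding H_def using Hfin by (simp add: less_top)
  define \<delta> where "\<delta> = \<epsilon>^(K+1) / 2"
  have \<delta>0: "\<delta> > 0" unfolding \<delta>_def using eps by simp
  have "H_delta \<theta> \<mu> \<delta> S \<le> H_theta \<theta> \<mu> S" unfolding H_theta_def using \<delta>0 by (intro SUP_upper) auto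
  also have "\<dots> < ennreal (H + 1)" unfolding HH using H0 by (simp add: ennreal_lessI)
  finally have "H_delta \<theta> \<mu> \<delta> S < ennreal (H + 1)" .
  then obtain I c r where cov: "\<forall>i\<in>I. 0 < r i \<and> r i < \<delta>" "S \<subseteq> (\<Union>i\<in>I. cball (c i) (r i))"
     and sumlt: "(\<Sum>i. if i \<in> I then emeasure \<mu> (cball (c i) (r i)) / ennreal (r i powr \<theta>) else 0) < ennreal (H + 1)"
    unfolding H_delta_def INF_less_iff by auto
  define J where "J = {i\<in>I. cball (c i) (r i) \<inter> A \<noteq> {}}"
  define Bs where "Bs i = (if i \<in> J then cball (c i) (r i) \<inter> E else {})" for i
  define f where "f i = (if i \<in> I then emeasure \<mu> (cball (c i) (r i)) / ennreal (r i powr \<theta>) else 0)" for i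
  define U where "U = (\<Union>i. Bs i)"
  have Bsb: "Bs i \<in> sets borel" for i unfolding Bs_def using E by auto
  then have Ub: "U \<in> sets borel" unfolding U_def by auto
  have AU: "A \<subseteq> U"
  proof
    fix x assume x: "x \<in> A"
    then have "x \<in> S" using E unfolding A_def by auto
    then obtain i where i: "i \<in> I" "x \<in> cball (c i) (r i)" using cov by auto
    then have "i \<in> J" unfolding J_def using x by auto
    then show "x \<in> U" unfolding U_def Bs_def using i x A_def by auto
  qed
  have bound: "emeasure m0 (Bs i) \<le> ennreal (t * Cc * D^M) * f i" for i
  proof (cases "i \<in> J")
    case False then show ?thesis unfolding Bs_def by simp
  next
    case True
    then have iI: "i \<in> I" unfolding J_def by auto
    obtain p where p: "p \<in> cball (c i) (r i)" "p \<in> A" using True unfolding J_def by auto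
    define ri where "ri = r i"
    define ci where "ci = c i"
    have ri: "0 < ri" "ri < \<delta>" using cov iI unfolding ri_def by auto
    have "2 * ri < \<epsilon>^(K+1)" using ri unfolding \<delta>_def by simp
    then obtain k where k: "k \<ge> K" "2 * ri \<le> \<epsilon>^k" "\<epsilon>^(k+1) < 2 * ri"
      using exists_scale[OF eps ri(1)] by blast
    have pS: "p \<in> S" and pE: "p \<in> E" using p E unfolding A_def by auto
    have apt: "a k p \<le> t" using p k unfolding A_def by auto
    have dp: "dist ci p \<le> ri" using p unfolding ci_def ri_def by auto
    have sub1: "cball ci ri \<subseteq> cball p (\<epsilon>^k)"
    proof
      fix y assume "y \<in> cball ci ri"
      then have "dist ci y \<le> ri" by auto
      then have "dist p y \<le> 2 * ri" using dp dist_triangle[of p y ci] by (simp add: dist_commute)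
      then show "y \<in> cball p (\<epsilon>^k)" using k by auto
    qed
    have ek: "\<epsilon>^k < 2 * ri / \<epsilon>" using k eps by (simp add: field_simps)
    have "ri + \<epsilon>^k \<le> ri * (1 + 2/\<epsilon>)" using ek ri eps by (simp add: field_simps)
    also have "\<dots> \<le> 2^M * ri" using M ri by simp
    finally have rr: "ri + \<epsilon>^k \<le> 2^M * ri" .
    have sub2: "cball p (\<epsilon>^k) \<subseteq> cball ci (2^M * ri)"
    proof
      fix y assume "y \<in> cball p (\<epsilon>^k)"
      then have "dist p y \<le> \<epsilon>^k" by auto
      then have "dist ci y \<le> ri + \<epsilon>^k" using dp dist_triangle[of ci y p] by simp
      then show "y \<in> cball ci (2^M * ri)" using rr by auto
    qed
    have finb: "\<And>z s. 0 < s \<Longrightarrow> cball z s \<in> fmeasurable \<mu>"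
      using mms unfolding mms_def by (auto simp: fmeasurable_def)
    have pos: "\<And>z s. 0 < s \<Longrightarrow> 0 < measure \<mu> (cball z s)"
      using mms unfolding mms_def by (simp add: measure_def enn2real_positive_iff)
    have mu1: "measure \<mu> (cball p (\<epsilon>^k)) \<le> measure \<mu> (cball ci (2^M * ri))"
      using sub2 ri finb[of "2^M * ri" ci] mms unfolding mms_def
      by (intro measure_mono_fmeasurable) auto
    have "\<epsilon>^(K+1) \<le> 1" using eps by (intro power_le_one) auto
    then have "ri \<le> 1" using ri unfolding \<delta>_def by simp
    then have "2^M * ri \<le> 2^M * 1" by (intro mult_left_mono) auto
    then have "2^M * ri \<le> 2 * 2^M" by simp
    then have mu2: "measure \<mu> (cball ci (2^M * ri)) \<le> D^M * measure \<mu> (cball ci ri)"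
      using dbl_iter[OF dbl D ri(1)] by blast
    have pw: "ri powr \<theta> \<le> (\<epsilon>^k) powr \<theta>" using k ri th by (intro powr_mono2) auto
    have pw0: "0 < ri powr \<theta>" using ri by simp
    have ak0: "a k p \<ge> 0 \<Longrightarrow> True" by simp
    have "emeasure m0 (Bs i) \<le> emeasure m0 (cball p (\<epsilon>^k) \<inter> E)"
      unfolding Bs_def using True sub1 sets0 E unfolding ci_def ri_def
      by (intro emeasure_mono) auto
    also have "\<dots> \<le> ennreal (Cc * a k p * measure \<mu> (cball p (\<epsilon>^k)) / (\<epsilon>^k) powr \<theta>)"
      using f3 pS by auto
    also have "\<dots> \<le> ennreal (Cc * t * D^M * measure \<mu> (cball ci ri) / ri powr \<theta>)"
    proof (rule ennreal_leI)
      have m0: "0 \<le> measure \<mu> (cball p (\<epsilon>^k))" by simp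
      have "Cc * a k p * measure \<mu> (cball p (\<epsilon>^k)) / (\<epsilon>^k) powr \<theta>
            \<le> Cc * t * measure \<mu> (cball p (\<epsilon>^k)) / (\<epsilon>^k) powr \<theta>"
        using apt Cc m0 by (intro divide_right_mono mult_right_mono mult_left_mono) auto
      also have "\<dots> \<le> Cc * t * measure \<mu> (cball p (\<epsilon>^k)) / ri powr \<theta>"
        using pw pw0 Cc t m0 eps by (intro divide_left_mono) (auto intro!: mult_pos_pos)
      also have "\<dots> \<le> Cc * t * (D^M * measure \<mu> (cball ci ri)) / ri powr \<theta>"
        using mu1 mu2 pw0 Cc t by (intro divide_right_mono mult_left_mono) auto
      finally show "Cc * a k p * measure \<mu> (cball p (\<epsilon>^k)) / (\<epsilon>^k) powr \<theta>
            \<le> Cc * t * D^M * measure \<mu> (cball ci ri) / ri powr \<theta>" by (simp add: mult.assoc)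
    qed
    also have "\<dots> = ennreal (t * Cc * D^M) * f i"
    proof -
      have e: "emeasure \<mu> (cball ci ri) = ennreal (measure \<mu> (cball ci ri))"
        using finb[OF ri(1), of ci] by (intro emeasure_eq_ennreal_measure) (auto simp: fmeasurable_def)
      have "f i = ennreal (measure \<mu> (cball ci ri) / ri powr \<theta>)"
        unfolding f_def using iI e pw0 by (simp add: ci_def ri_def divide_ennreal)
      then show ?thesis using t Cc D pw0
        by (simp add: ennreal_mult[symmetric] mult_ac)
    qed
    finally show ?thesis .
  qed
  have "emeasure m0 U \<le> (\<Sum>i. emeasure m0 (Bs i))"
    unfolding U_def using Bsb sets0 by (intro emeasure_subadditive_countably) auto
  also have "\<dots> \<le> (\<Sum>i. ennreal (t * Cc * D^M) * f i)"
    using bound by (intro suminf_le) auto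
  also have "\<dots> = ennreal (t * Cc * D^M) * (\<Sum>i. f i)" by simp
  also have "\<dots> \<le> ennreal (t * Cc * D^M) * ennreal (H + 1)"
    using sumlt unfolding f_def by (intro mult_left_mono) auto
  also have "\<dots> = ennreal (t * Cc * D^M * (H + 1))"
    using t Cc D H0 by (simp add: ennreal_mult)
  finally show ?thesis using Ub AU unfolding A_def H_def by blast
qed


theorem mainTheorem9:
  fixes \<mu> :: "'a::polish_space measure" and p \<theta> \<epsilon> :: real and S :: "'a set"
  assumes "1 < p" and "class_A p \<mu>"
    and "0 \<le> \<theta>" and "ereal \<theta> < Q_lower \<mu> 1"
    and "closed S" and "0 < H_theta \<theta> \<mu> S" and "H_theta \<theta> \<mu> S < \<infinity>"
    and "0 < \<epsilon>" and "\<epsilon> < 1"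
  shows "M_str_class \<theta> \<epsilon> \<mu> S = M_class \<theta> \<epsilon> \<mu> S"
proof
  show "M_str_class \<theta> \<epsilon> \<mu> S \<subseteq> M_class \<theta> \<epsilon> \<mu> S" unfolding M_str_class_def by blast
  have th: "0 \<le> \<theta>" and eps: "0 < \<epsilon>" "\<epsilon> < 1" and Hfin: "H_theta \<theta> \<mu> S < \<infinity>"
    using assms by auto
  have mms: "mms \<mu>" and uld: "unif_loc_doubling \<mu>" using assms(2) unfolding class_A_def by auto
  define M where "M = nat \<lceil>1 + 2/\<epsilon>\<rceil>"
  have "1 + 2/\<epsilon> \<le> real M" unfolding M_def by linarith
  also have "real M \<le> 2^M" using less_exp[of M] by (metis of_nat_le_iff of_nat_numeral of_nat_power less_imp_le)
  finally have Mb: "1 + 2/\<epsilon> \<le> 2^M" .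
  obtain D where dbl: "\<forall>r x. 0 < r \<longrightarrow> r \<le> 2^M \<longrightarrow> measure \<mu> (cball x (2*r)) \<le> D * measure \<mu> (cball x r)"
    using uld unfolding unif_loc_doubling_def by (metis zero_less_numeral zero_less_power)
  have pos: "\<And>z s. 0 < s \<Longrightarrow> 0 < measure \<mu> (cball z s)"
    using mms unfolding mms_def by (simp add: measure_def enn2real_positive_iff)
  have D0: "D \<ge> 0"
  proof (rule ccontr)
    assume "\<not> D \<ge> 0"
    then have "D * measure \<mu> (cball undefined 1) < 0" using pos[of 1 undefined] by (simp add: mult_neg_pos)
    moreover have "measure \<mu> (cball undefined (2*1)) \<le> D * measure \<mu> (cball undefined 1)"
      using dbl[rule_format, of 1 undefined] by simp
    ultimately show False using measure_nonneg[of \<mu> "cball undefined (2*1)"] by linarith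
  qed
  show "M_class \<theta> \<epsilon> \<mu> S \<subseteq> M_str_class \<theta> \<epsilon> \<mu> S"
  proof
    fix m assume m: "m \<in> M_class \<theta> \<epsilon> \<mu> S"
    note mc = m[unfolded M_class_def mem_Collect_eq]
    have meas: "\<forall>k. is_meas (m k)" using mc by (rule conjunct1)
    then have sets: "\<forall>k. sets (m k) = sets borel" unfolding is_meas_def by blast
    have ex1: "\<exists>C1>0. \<forall>k x r. 0 < r \<longrightarrow> r \<le> \<epsilon>^k \<longrightarrow>
        emeasure (m k) (cball x r) \<le> ennreal (C1 * measure \<mu> (cball x r) / r powr \<theta>)"
      using mc[THEN conjunct2, THEN conjunct2, THEN conjunct1] .
    obtain C1 where C1: "C1 > 0" "\<forall>k x r. 0 < r \<longrightarrow> r \<le> \<epsilon>^k \<longrightarrow>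
        emeasure (m k) (cball x r) \<le> ennreal (C1 * measure \<mu> (cball x r) / r powr \<theta>)"
      using ex1 by blast
    have ex3: "\<exists>w::nat \<Rightarrow> 'a \<Rightarrow> real.
        (\<forall>k. w k \<in> borel_measurable borel \<and> (\<exists>B. AE x in m 0. \<bar>w k x\<bar> \<le> B) \<and>
             m k = density (m 0) (\<lambda>x. ennreal (w k x))) \<and>
        (\<exists>C3>0. \<forall>k j. AE x in m 0. x \<in> S \<longrightarrow>
             \<epsilon> powr (\<theta> * real j) / C3 \<le> w k x / w (k + j) x \<and> w k x / w (k + j) x \<le> C3)"
      using mc[THEN conjunct2, THEN conjunct2, THEN conjunct2, THEN conjunct2] .
    obtain w :: "nat \<Rightarrow> 'a \<Rightarrow> real" and C3 where
      wd: "\<forall>k. w k \<in> borel_measurable borel \<and> (\<exists>B. AE x in m 0. \<bar>w k x\<bar> \<le> B) \<and>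
             m k = density (m 0) (\<lambda>x. ennreal (w k x))"
      and C3: "C3 > 0" "\<forall>k j. AE x in m 0. x \<in> S \<longrightarrow>
             \<epsilon> powr (\<theta> * real j) / C3 \<le> w k x / w (k + j) x \<and> w k x / w (k + j) x \<le> C3"
      using ex3 by blast
    have wd': "\<forall>k. w k \<in> borel_measurable borel \<and> m k = density (m 0) (\<lambda>x. ennreal (w k x))"
      using wd by blast
    have M5: "AE x in m 0. x \<in> E \<longrightarrow>
          limsup (\<lambda>k. ereal (measure (m k) (cball x (\<epsilon>^k) \<inter> E) / measure (m k) (cball x (\<epsilon>^k)))) > 0"
      if E: "E \<in> sets borel" "E \<subseteq> S" for E
    proof -
      define a where "a = (\<lambda>k x. measure (m k) (cball x (\<epsilon>^k) \<inter> E) / measure (m k) (cball x (\<epsilon>^k)))"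
      have f2: "\<forall>k A. A \<in> sets borel \<longrightarrow> A \<subseteq> S \<longrightarrow> emeasure (m 0) A \<le> ennreal C3 * emeasure (m k) A"
        using fact2[OF _ wd' C3 eps(1)] sets by blast
      have f3: "\<forall>x\<in>S. \<forall>k. emeasure (m 0) (cball x (\<epsilon>^k) \<inter> E) \<le> ennreal ((C3 * C1) * a k x * measure \<mu> (cball x (\<epsilon>^k)) / (\<epsilon>^k) powr \<theta>)"
        using fact3[OF sets C1 f2 C3(1) eps(1) E] unfolding a_def by auto
      define Cst where "Cst = (C3 * C1) * D^M * (enn2real (H_theta \<theta> \<mu> S) + 1)"
      have cb: "\<exists>U\<in>sets borel. {x\<in>E. \<forall>k\<ge>K. a k x \<le> t} \<subseteq> U \<and> emeasure (m 0) U \<le> ennreal (t * Cst)"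
        if "t > 0" for t K
        using cover_bound[OF mms dbl D0 Mb th eps Hfin sets[rule_format, of 0] E f3 _ that, of K] C1 C3
        unfolding Cst_def by (simp add: mult.assoc)
      define Uf where "Uf n K = (SOME U. U \<in> sets borel \<and> {x\<in>E. \<forall>k\<ge>K. a k x \<le> 1 / real (Suc n)} \<subseteq> U \<and>
             emeasure (m 0) U \<le> ennreal (1 / real (Suc n) * Cst))" for n K
      have Uf: "Uf n K \<in> sets borel \<and> {x\<in>E. \<forall>k\<ge>K. a k x \<le> 1 / real (Suc n)} \<subseteq> Uf n K \<and>
             emeasure (m 0) (Uf n K) \<le> ennreal (1 / real (Suc n) * Cst)" for n K
        unfolding Uf_def by (rule someI_ex) (use cb[of "1 / real (Suc n)" K] in auto)
      define V where "V n K = (\<Inter>j\<in>{K..}. Uf n j)" for n K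
      define N where "N = (\<Inter>n. \<Union>K. V n K)"
      have Vb: "V n K \<in> sets borel" for n K
        unfolding V_def using Uf by (intro sets.countable_INT) auto
      have Nb: "N \<in> sets borel" unfolding N_def using Vb by auto
      have Vle: "emeasure (m 0) (V n K) \<le> ennreal (1 / real (Suc n) * Cst)" for n K
      proof -
        have "V n K \<subseteq> Uf n K" unfolding V_def by auto
        then have "emeasure (m 0) (V n K) \<le> emeasure (m 0) (Uf n K)"
          using Uf sets by (intro emeasure_mono) auto
        then show ?thesis using Uf order_trans by blast
      qed
      have Nle: "emeasure (m 0) N \<le> ennreal (Cst / real (Suc n))" for n
      proof -
        have "N \<subseteq> (\<Union>K. V n K)" unfolding N_def by auto
        then have "emeasure (m 0) N \<le> emeasure (m 0) (\<Union>K. V n K)"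
          using Vb sets by (intro emeasure_mono) auto
        also have "\<dots> = (SUP K. emeasure (m 0) (V n K))"
          using Vb sets by (intro SUP_emeasure_incseq[symmetric]) (auto simp: incseq_def V_def)
        also have "\<dots> \<le> ennreal (1 / real (Suc n) * Cst)" using Vle by (intro SUP_least) auto
        finally show ?thesis by simp
      qed
      have N0: "emeasure (m 0) N = 0"
      proof -
        have fin: "emeasure (m 0) N < \<infinity>" using Nle[of 0]
          by (metis ennreal_less_top infinity_ennreal_def le_less_trans)
        define r where "r = enn2real (emeasure (m 0) N)"
        have rr: "emeasure (m 0) N = ennreal r" "r \<ge> 0" unfolding r_def using fin by (auto simp: less_top)
        have "r \<le> Cst / real (Suc n)" for n
        proof -
          have "Cst \<ge> 0" unfolding Cst_def using C1 C3 D0 by simp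
          then show ?thesis using Nle[of n] rr by (simp add: ennreal_le_iff)
        qed
        moreover have "(\<lambda>n. Cst / real (Suc n)) \<longlonglongrightarrow> 0"
          using LIMSEQ_Suc[OF lim_const_over_n[of Cst]] by simp
        ultimately have "r \<le> 0" using LIMSEQ_le_const[of "\<lambda>n. Cst / real (Suc n)" 0 r] by blast
        then show ?thesis using rr by simp
      qed
      have bad: "{x \<in> space (m 0). \<not> (x \<in> E \<longrightarrow> limsup (\<lambda>k. ereal (a k x)) > 0)} \<subseteq> N"
      proof
        fix x assume "x \<in> {x \<in> space (m 0). \<not> (x \<in> E \<longrightarrow> limsup (\<lambda>k. ereal (a k x)) > 0)}"
        then have xE: "x \<in> E" and ls: "limsup (\<lambda>k. ereal (a k x)) \<le> 0" by auto
        show "x \<in> N" unfolding N_def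
        proof
          fix n
          have "ereal (1 / real (Suc n)) > limsup (\<lambda>k. ereal (a k x))"
            using ls by (rule le_less_trans) simp
          then have "eventually (\<lambda>k. ereal (a k x) < ereal (1 / real (Suc n))) sequentially"
            by (rule Limsup_lessD)
          then obtain K where K: "\<forall>k\<ge>K. a k x \<le> 1 / real (Suc n)"
            unfolding eventually_sequentially by (meson less_eq_ereal_def ereal_less_eq(3))
          have "x \<in> V n K" unfolding V_def
          proof
            fix j assume "j \<in> {K..}"
            then have "x \<in> {x\<in>E. \<forall>k\<ge>j. a k x \<le> 1 / real (Suc n)}" using K xE by auto
            then show "x \<in> Uf n j" using Uf by blast
          qed
          then show "x \<in> (\<Union>K. V n K)" by auto
        qed
      qed
      have "AE x in m 0. x \<in> E \<longrightarrow> limsup (\<lambda>k. ereal (a k x)) > 0"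
        using N0 Nb sets bad by (intro AE_I'[of N]) auto
      then show ?thesis unfolding a_def .
    qed
    have M5': "\<forall>E. E \<in> sets borel \<longrightarrow> E \<subseteq> S \<longrightarrow> (AE x in m 0. x \<in> E \<longrightarrow>
          limsup (\<lambda>k. ereal (measure (m k) (cball x (\<epsilon>^k) \<inter> E) / measure (m k) (cball x (\<epsilon>^k)))) > 0)"
      by (intro allI impI) (rule M5; assumption)
    show "m \<in> M_str_class \<theta> \<epsilon> \<mu> S" unfolding M_str_class_def mem_Collect_eq
      by (rule conjI[OF m M5'])
  qed
qed

end
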